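(* Let $\Sigma=\{1,\dots,q\}^{\mathbb N}$ with shift $\sigma$ and $\psi:\Sigma\to\mathbb R$ continuous. If $\lim_{n\to\infty}\frac1n\|\xi_n\|_\infty=0$, then every conformal measure for $\psi$ is a weak Gibbs measure for $\psi$, and $\psi$ is of weak bounded variation.
   Context: $\mathcal L_\psi\phi(\underline x)=\sum_{\underline y\in\sigma^{-1}\underline x}e^{\psi(\underline y)}\phi(\underline y)$; a conformal measure is a finite positive measure $\mu$ with $\mathcal L_\psi^*\mu=r(\mathcal L_\psi)\mu$, where $r$ is the spectral radius and $(\mathcal L_\psi^*\mu)(\phi)=\int\mathcal L_\psi\phi\,d\mu$. Cylinders $[a_0\dots a_{n-1}]$, $\mathcal C_n$ the set of cylinders of length $n$, $\psi^n=\sum_{i<n}\psi\circ\sigma^i$, $\xi_n(\underline x)=\sup_{\underline y\in[x_0\dots x_{n-1}]}\sum_{i=0}^{n-1}|\psi(\sigma^i\underline x)-\psi(\sigma^i\underline y)|$. $\mu$ is a weak Gibbs measure for $\psi$ if there are a constant $P$ and positive numbers $K_n$ with $\lim_n\frac{\log K_n}{n}=0$ such that for all $n$, $\underline x$ and $\underline y\in[x_0\dots x_{n-1}]$: $K_n^{-1}\le\mu([x_0\dots x_{n-1}])e^{-\psi^n(\underline y)+nP}\le K_n$. $\psi$ is of weak bounded variation if there are positive $K_n$ with $\lim_n\frac{\log K_n}n=0$ and $\sup_{C\in\mathcal C_n}\sup_{\underline y,\underline w\in C}e^{\psi^n(\underline y)-\psi^n(\underline w)}\le K_n$ for all $n$.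 *)

theory Defs
  imports "HOL-Analysis.Analysis" "HOL-Probability.Probability"
begin

text \<open>The full shift on q symbols: Sigma = {1..q}^N, represented as a subset of
  nat => nat with the product topology (nat discrete).\<close>
definition Sig :: "nat \<Rightarrow> (nat \<Rightarrow> nat) set" where
  "Sig q = {x. \<forall>i. x i \<in> {1..q}}"

definition shift :: "(nat \<Rightarrow> nat) \<Rightarrow> (nat \<Rightarrow> nat)" where
  "shift x = (\<lambda>i. x (Suc i))"

definition birk :: "((nat \<Rightarrow> nat) \<Rightarrow> real) \<Rightarrow> nat \<Rightarrow> (nat \<Rightarrow> nat) \<Rightarrow> real" where
  "birk psi n y = (\<Sum>i<n. psi ((shift ^^ i) y))"

definition cyl :: "nat \<Rightarrow> nat \<Rightarrow> (nat \<Rightarrow> nat) \<Rightarrow> (nat \<Rightarrow> nat) set" where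
  "cyl q n x = {y \<in> Sig q. \<forall>i<n. y i = x i}"

definition cylinders :: "nat \<Rightarrow> nat \<Rightarrow> (nat \<Rightarrow> nat) set set" where
  "cylinders q n = {cyl q n x | x. x \<in> Sig q}"

definition transfer :: "nat \<Rightarrow> ((nat \<Rightarrow> nat) \<Rightarrow> real) \<Rightarrow> ((nat \<Rightarrow> nat) \<Rightarrow> real) \<Rightarrow> (nat \<Rightarrow> nat) \<Rightarrow> real" where
  "transfer q psi phi x = (\<Sum>y\<in>{y \<in> Sig q. shift y = x}. exp (psi y) * phi y)"

definition transfer_opnorm :: "nat \<Rightarrow> ((nat \<Rightarrow> nat) \<Rightarrow> real) \<Rightarrow> nat \<Rightarrow> real" where
  "transfer_opnorm q psi n =
     (SUP phi \<in> {phi. continuous_on (Sig q) phi \<and> (\<forall>x\<in>Sig q. \<bar>phi x\<bar> \<le> 1)}.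
        (SUP x \<in> Sig q. \<bar>((transfer q psi) ^^ n) phi x\<bar>))"

text \<open>Spectral radius via Gelfand's formula r(L) = lim ||L^n||^(1/n).\<close>
definition spectral_radius_transfer :: "nat \<Rightarrow> ((nat \<Rightarrow> nat) \<Rightarrow> real) \<Rightarrow> real" where
  "spectral_radius_transfer q psi = lim (\<lambda>n. transfer_opnorm q psi n powr (1 / real n))"

definition finite_pos_measure_on :: "nat \<Rightarrow> (nat \<Rightarrow> nat) measure \<Rightarrow> bool" where
  "finite_pos_measure_on q \<mu> \<longleftrightarrow>
     space \<mu> = Sig q \<and> sets \<mu> = sets (restrict_space borel (Sig q)) \<and>
     finite_measure \<mu> \<and> emeasure \<mu> (Sig q) > 0"

definition conformal :: "nat \<Rightarrow> ((nat \<Rightarrow> nat) \<Rightarrow> real) \<Rightarrow> (nat \<Rightarrow> nat) measure \<Rightarrow> bool" where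
  "conformal q psi \<mu> \<longleftrightarrow> finite_pos_measure_on q \<mu> \<and>
     (\<forall>phi. continuous_on (Sig q) phi \<longrightarrow>
        (\<integral>x. transfer q psi phi x \<partial>\<mu>) = spectral_radius_transfer q psi * (\<integral>x. phi x \<partial>\<mu>))"

definition xi :: "nat \<Rightarrow> ((nat \<Rightarrow> nat) \<Rightarrow> real) \<Rightarrow> nat \<Rightarrow> (nat \<Rightarrow> nat) \<Rightarrow> real" where
  "xi q psi n x = (SUP y \<in> cyl q n x. \<Sum>i<n. \<bar>psi ((shift ^^ i) x) - psi ((shift ^^ i) y)\<bar>)"

definition xi_supnorm :: "nat \<Rightarrow> ((nat \<Rightarrow> nat) \<Rightarrow> real) \<Rightarrow> nat \<Rightarrow> real" where
  "xi_supnorm q psi n = (SUP x \<in> Sig q. \<bar>xi q psi n x\<bar>)"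

definition weak_gibbs :: "nat \<Rightarrow> ((nat \<Rightarrow> nat) \<Rightarrow> real) \<Rightarrow> (nat \<Rightarrow> nat) measure \<Rightarrow> bool" where
  "weak_gibbs q psi \<mu> \<longleftrightarrow> (\<exists>(P::real) (K::nat \<Rightarrow> real). (\<forall>n. K n > 0) \<and>
     (\<lambda>n. ln (K n) / real n) \<longlonglongrightarrow> 0 \<and>
     (\<forall>n x y. x \<in> Sig q \<longrightarrow> y \<in> cyl q n x \<longrightarrow>
        1 / K n \<le> measure \<mu> (cyl q n x) * exp (- birk psi n y + real n * P) \<and>
        measure \<mu> (cyl q n x) * exp (- birk psi n y + real n * P) \<le> K n))"

definition weak_bounded_variation :: "nat \<Rightarrow> ((nat \<Rightarrow> nat) \<Rightarrow> real) \<Rightarrow> bool" where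
  "weak_bounded_variation q psi \<longleftrightarrow> (\<exists>K::nat \<Rightarrow> real. (\<forall>n. K n > 0) \<and>
     (\<lambda>n. ln (K n) / real n) \<longlonglongrightarrow> 0 \<and>
     (\<forall>n. \<forall>C \<in> cylinders q n. \<forall>y\<in>C. \<forall>w\<in>C. exp (birk psi n y - birk psi n w) \<le> K n))"

end

theory Submission
  imports Defs
begin

definition ccons :: "nat \<Rightarrow> (nat \<Rightarrow> nat) \<Rightarrow> (nat \<Rightarrow> nat)" where
  "ccons a x = (\<lambda>i. case i of 0 \<Rightarrow> a | Suc j \<Rightarrow> x j)"

definition capp :: "nat list \<Rightarrow> (nat \<Rightarrow> nat) \<Rightarrow> (nat \<Rightarrow> nat)" where
  "capp w x = (\<lambda>i. if i < length w then w ! i else x (i - length w))"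

lemma shift_ccons[simp]: "shift (ccons a x) = x"
  by (simp add: shift_def ccons_def)

lemma capp_Cons: "capp (a # w) x = ccons a (capp w x)"
  by (auto simp: capp_def ccons_def fun_eq_iff split: nat.split)

lemma capp_Nil[simp]: "capp [] x = x"
  by (simp add: capp_def)

lemma ccons_Sig: "a \<in> {1..q} \<Longrightarrow> x \<in> Sig q \<Longrightarrow> ccons a x \<in> Sig q"
  by (auto simp: Sig_def ccons_def split: nat.split)

lemma capp_Sig: "set w \<subseteq> {1..q} \<Longrightarrow> x \<in> Sig q \<Longrightarrow> capp w x \<in> Sig q"
  unfolding Sig_def capp_def using nth_mem by fastforce

lemma shift_Sig: "x \<in> Sig q \<Longrightarrow> shift x \<in> Sig q"
  by (simp add: Sig_def shift_def)

lemma funpow_shift_Sig: "x \<in> Sig q \<Longrightarrow> (shift ^^ i) x \<in> Sig q"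
  by (induction i) (auto simp: shift_Sig)

lemma preimage_eq: "x \<in> Sig q \<Longrightarrow> {y \<in> Sig q. shift y = x} = (\<lambda>a. ccons a x) ` {1..q}"
proof (intro equalityI subsetI)
  fix y assume "y \<in> {y \<in> Sig q. shift y = x}"
  then have y: "y \<in> Sig q" "shift y = x" by auto
  have "y = ccons (y 0) x" using y(2) by (auto simp: fun_eq_iff ccons_def shift_def split: nat.split)
  moreover have "y 0 \<in> {1..q}" using y(1) by (auto simp: Sig_def)
  ultimately show "y \<in> (\<lambda>a. ccons a x) ` {1..q}" by blast
next
  fix y assume "x \<in> Sig q" "y \<in> (\<lambda>a. ccons a x) ` {1..q}"
  then show "y \<in> {y \<in> Sig q. shift y = x}" using ccons_Sig by auto
qed

lemma transfer_eq: "x \<in> Sig q \<Longrightarrow>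
  transfer q psi phi x = (\<Sum>a\<in>{1..q}. exp (psi (ccons a x)) * phi (ccons a x))"
proof -
  assume x: "x \<in> Sig q"
  have inj: "inj_on (\<lambda>a. ccons a x) {1..q}"
    by (rule inj_onI) (metis ccons_def old.nat.simps(4))
  show ?thesis unfolding transfer_def preimage_eq[OF x] sum.reindex[OF inj] by simp
qed

lemma birk_Suc: "birk psi (Suc n) y = psi y + birk psi n (shift y)"
  unfolding birk_def sum.lessThan_Suc_shift by (simp add: funpow_Suc_right del: funpow.simps)

lemma transfer_iter: "x \<in> Sig q \<Longrightarrow> ((transfer q psi) ^^ n) phi x =
   (\<Sum>w\<in>{w. set w \<subseteq> {1..q} \<and> length w = n}. exp (birk psi n (capp w x)) * phi (capp w x))"
proof (induction n arbitrary: phi x)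
  case 0
  have "{w. set w \<subseteq> {1..q} \<and> length w = 0} = {[]}" by auto
  then show ?case by (simp add: birk_def)
next
  case (Suc n)
  let ?W = "{w. set w \<subseteq> {1..q} \<and> length w = n}"
  have "((transfer q psi) ^^ Suc n) phi x = ((transfer q psi) ^^ n) (transfer q psi phi) x"
    by (simp add: funpow_Suc_right del: funpow.simps)
  also have "\<dots> = (\<Sum>w\<in>?W. exp (birk psi n (capp w x)) * transfer q psi phi (capp w x))"
    using Suc by simp
  also have "\<dots> = (\<Sum>w\<in>?W. \<Sum>a\<in>{1..q}. exp (birk psi (Suc n) (capp (a#w) x)) * phi (capp (a#w) x))"
  proof (rule sum.cong[OF refl])
    fix w assume "w \<in> ?W"
    then have "capp w x \<in> Sig q" using capp_Sig Suc.prems by auto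
    then show "exp (birk psi n (capp w x)) * transfer q psi phi (capp w x) =
      (\<Sum>a\<in>{1..q}. exp (birk psi (Suc n) (capp (a#w) x)) * phi (capp (a#w) x))"
      by (simp add: transfer_eq sum_distrib_left capp_Cons birk_Suc exp_add algebra_simps)
  qed
  also have "\<dots> = (\<Sum>(w,a)\<in>?W \<times> {1..q}. exp (birk psi (Suc n) (capp (a#w) x)) * phi (capp (a#w) x))"
    by (simp add: sum.cartesian_product)
  also have "\<dots> = (\<Sum>v\<in>(\<lambda>(xs, n). n # xs) ` (?W \<times> {1..q}). exp (birk psi (Suc n) (capp v x)) * phi (capp v x))"
    by (subst sum.reindex) (auto simp: inj_on_def case_prod_beta)
  also have "\<dots> = (\<Sum>v\<in>{w. set w \<subseteq> {1..q} \<and> length w = Suc n}. exp (birk psi (Suc n) (capp v x)) * phi (capp v x))"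
    by (simp only: lists_length_Suc_eq)
  finally show ?case .
qed

lemma cont_ccons: "continuous_on S (ccons a)"
proof (rule continuous_on_coordinatewise_then_product)
  fix i show "continuous_on S (\<lambda>x. ccons a x i)"
  proof (cases i)
    case 0 then show ?thesis by (simp add: ccons_def)
  next
    case (Suc j) then show ?thesis
      by (simp add: ccons_def) (rule continuous_on_subset[OF continuous_on_product_coordinates], simp)
  qed
qed

lemma transfer_cont:
  assumes psi: "continuous_on (Sig q) psi" and phi: "continuous_on (Sig q) phi"
  shows "continuous_on (Sig q) (transfer q psi phi)"
proof -
  have c: "continuous_on (Sig q) (\<lambda>x. f (ccons a x))" if "a \<in> {1..q}" "continuous_on (Sig q) f" for f a
    by (rule continuous_on_compose2[OF that(2) cont_ccons]) (use that ccons_Sig in auto)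
  have "continuous_on (Sig q) (\<lambda>x. \<Sum>a\<in>{1..q}. exp (psi (ccons a x)) * phi (ccons a x))"
    by (intro continuous_on_sum ballI continuous_on_mult continuous_on_exp c psi phi) auto
  then show ?thesis by (rule continuous_on_cong[THEN iffD1, rotated 2]) (auto simp: transfer_eq)
qed

lemma transfer_iter_cont:
  assumes psi: "continuous_on (Sig q) psi" and phi: "continuous_on (Sig q) phi"
  shows "continuous_on (Sig q) (((transfer q psi) ^^ n) phi)"
  using phi by (induction n arbitrary: phi) (auto simp: funpow_Suc_right transfer_cont[OF psi] simp del: funpow.simps)

lemma conf_iter:
  assumes "conformal q psi \<mu>" and psi: "continuous_on (Sig q) psi"
    and "continuous_on (Sig q) phi"
  shows "(\<integral>x. ((transfer q psi) ^^ n) phi x \<partial>\<mu>) = spectral_radius_transfer q psi ^ n * (\<integral>x. phi x \<partial>\<mu>)"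
  using assms(3)
proof (induction n arbitrary: phi)
  case 0 then show ?case by simp
next
  case (Suc n)
  have "(\<integral>x. ((transfer q psi) ^^ Suc n) phi x \<partial>\<mu>) = (\<integral>x. ((transfer q psi) ^^ n) (transfer q psi phi) x \<partial>\<mu>)"
    by (simp add: funpow_Suc_right del: funpow.simps)
  also have "\<dots> = spectral_radius_transfer q psi ^ n * (\<integral>x. transfer q psi phi x \<partial>\<mu>)"
    using Suc.IH transfer_cont[OF psi Suc.prems] by blast
  also have "\<dots> = spectral_radius_transfer q psi ^ Suc n * (\<integral>x. phi x \<partial>\<mu>)"
    using assms(1) Suc.prems unfolding conformal_def by simp
  finally show ?case .
qed

lemma compact_Sig: "compact (Sig q)"
proof -
  have "Sig q = PiE UNIV (\<lambda>_. {1..q})" unfolding Sig_def PiE_def by auto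
  moreover have "compactin (product_topology (\<lambda>_. euclidean) UNIV) (PiE UNIV (\<lambda>_. {1..(q::nat)}))"
    by (simp add: compactin_PiE finite_imp_compact)
  ultimately show ?thesis by (metis compactin_euclidean_iff euclidean_product_topology)
qed

lemma psi_bounded:
  fixes psi :: "(nat \<Rightarrow> nat) \<Rightarrow> real"
  assumes "continuous_on (Sig q) psi"
  obtains M where "\<And>x. x \<in> Sig q \<Longrightarrow> \<bar>psi x\<bar> \<le> M"
proof -
  have "bounded (psi ` Sig q)"
    by (rule compact_imp_bounded[OF compact_continuous_image[OF assms compact_Sig]])
  then obtain M where "\<forall>y\<in>psi ` Sig q. norm y \<le> M" by (auto simp: bounded_iff)
  then show ?thesis using that by auto
qed

lemma xi_props:
  assumes psi: "continuous_on (Sig q) psi" and M: "\<And>x. x \<in> Sig q \<Longrightarrow> \<bar>psi x\<bar> \<le> M"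
    and x: "x \<in> Sig q"
  shows "bdd_above ((\<lambda>y. \<Sum>i<n. \<bar>psi ((shift ^^ i) x) - psi ((shift ^^ i) y)\<bar>) ` cyl q n x)"
    and "0 \<le> xi q psi n x" and "xi q psi n x \<le> 2 * real n * M"
proof -
  have b: "(\<Sum>i<n. \<bar>psi ((shift ^^ i) x) - psi ((shift ^^ i) y)\<bar>) \<le> 2 * real n * M" if "y \<in> cyl q n x" for y
  proof -
    have "(\<Sum>i<n. \<bar>psi ((shift ^^ i) x) - psi ((shift ^^ i) y)\<bar>) \<le> (\<Sum>i<n. 2 * M)"
    proof (rule sum_mono)
      fix i
      have "y \<in> Sig q" using that by (simp add: cyl_def)
      then have "\<bar>psi ((shift ^^ i) y)\<bar> \<le> M" "\<bar>psi ((shift ^^ i) x)\<bar> \<le> M"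
        using M funpow_shift_Sig x by auto
      then show "\<bar>psi ((shift ^^ i) x) - psi ((shift ^^ i) y)\<bar> \<le> 2 * M" by linarith
    qed
    then show ?thesis by simp
  qed
  show bdd: "bdd_above ((\<lambda>y. \<Sum>i<n. \<bar>psi ((shift ^^ i) x) - psi ((shift ^^ i) y)\<bar>) ` cyl q n x)"
    using b by (intro bdd_aboveI2) blast
  have xx: "x \<in> cyl q n x" using x by (simp add: cyl_def)
  have "(\<Sum>i<n. \<bar>psi ((shift ^^ i) x) - psi ((shift ^^ i) x)\<bar>) \<le> xi q psi n x"
    unfolding xi_def by (rule cSUP_upper[OF xx bdd])
  then show "0 \<le> xi q psi n x" by simp
  show "xi q psi n x \<le> 2 * real n * M"
    unfolding xi_def using xx b by (intro cSUP_least) auto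
qed

lemma xi_bound:
  assumes psi: "continuous_on (Sig q) psi" and y: "y \<in> Sig q" and w: "w \<in> cyl q n y"
  shows "\<bar>birk psi n y - birk psi n w\<bar> \<le> xi_supnorm q psi n"
proof -
  obtain M where M: "\<And>x. x \<in> Sig q \<Longrightarrow> \<bar>psi x\<bar> \<le> M" using psi_bounded[OF psi] by blast
  have "\<bar>birk psi n y - birk psi n w\<bar> = \<bar>\<Sum>i<n. psi ((shift ^^ i) y) - psi ((shift ^^ i) w)\<bar>"
    by (simp add: birk_def sum_subtractf)
  also have "\<dots> \<le> (\<Sum>i<n. \<bar>psi ((shift ^^ i) y) - psi ((shift ^^ i) w)\<bar>)"
    by (rule sum_abs)
  also have "\<dots> \<le> xi q psi n y"
    unfolding xi_def by (rule cSUP_upper[OF w xi_props(1)[OF psi M y]])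
  also have "\<dots> \<le> \<bar>xi q psi n y\<bar>" by simp
  also have "\<dots> \<le> xi_supnorm q psi n"
    unfolding xi_supnorm_def
  proof (rule cSUP_upper[OF y])
    show "bdd_above ((\<lambda>x. \<bar>xi q psi n x\<bar>) ` Sig q)"
    proof (intro bdd_aboveI2)
      fix x assume "x \<in> Sig q"
      then show "\<bar>xi q psi n x\<bar> \<le> 2 * real n * M" using xi_props(2,3)[OF psi M] by force
    qed
  qed
  finally show ?thesis .
qed

theorem proposition5:
  fixes q :: nat and psi :: "(nat \<Rightarrow> nat) \<Rightarrow> real"
  assumes "continuous_on (Sig q) psi"
    and "(\<lambda>n. xi_supnorm q psi n / real n) \<longlonglongrightarrow> 0"
  shows "(\<forall>\<mu>. conformal q psi \<mu> \<longrightarrow> weak_gibbs q psi \<mu>) \<and> weak_bounded_variation q psi"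
proof -
  let ?X = "xi_supnorm q psi"
  note psi = assms(1)
  have wbv: "weak_bounded_variation q psi"
    unfolding weak_bounded_variation_def
  proof (intro exI[of _ "\<lambda>n. exp (?X n)"] conjI allI ballI)
    show "(\<lambda>n. ln (exp (?X n)) / real n) \<longlonglongrightarrow> 0" using assms(2) by simp
  next
    fix n C y w assume C: "C \<in> cylinders q n" and y: "y \<in> C" and w: "w \<in> C"
    then obtain x where x: "x \<in> Sig q" "C = cyl q n x" by (auto simp: cylinders_def)
    have yS: "y \<in> Sig q" and wy: "w \<in> cyl q n y" using y w x by (auto simp: cyl_def)
    have "birk psi n y - birk psi n w \<le> ?X n" using xi_bound[OF psi yS wy] by linarith
    then show "exp (birk psi n y - birk psi n w) \<le> exp (?X n)" by simp
  qed simp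
  have wg: "weak_gibbs q psi \<mu>" if conf: "conformal q psi \<mu>" for \<mu>
  proof -
    let ?r = "spectral_radius_transfer q psi"
    let ?m = "measure \<mu> (Sig q)"
    have sp: "space \<mu> = Sig q" and st: "sets \<mu> = sets (restrict_space borel (Sig q))"
      and fm: "finite_measure \<mu>" and pos: "emeasure \<mu> (Sig q) > 0"
      using conf unfolding conformal_def finite_pos_measure_on_def by auto
    have mpos: "?m > 0"
      using pos finite_measure.emeasure_eq_measure[OF fm] by simp
    have key: "?m * exp (birk psi n y - ?X n) \<le> ?r ^ n * measure \<mu> (cyl q n x0) \<and>
               ?r ^ n * measure \<mu> (cyl q n x0) \<le> ?m * exp (birk psi n y + ?X n)"
      if x0: "x0 \<in> Sig q" and y: "y \<in> cyl q n x0" for n x0 y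
    proof -
      define w0 where "w0 = map x0 [0..<n]"
      define phi :: "(nat \<Rightarrow> nat) \<Rightarrow> real" where "phi = indicator (cyl q n x0)"
      define g where "g = (\<lambda>x. exp (birk psi n (capp w0 x)))"
      have yS: "y \<in> Sig q" using y by (simp add: cyl_def)
      have w0W: "w0 \<in> {w. set w \<subseteq> {1..q} \<and> length w = n}"
        using x0 by (auto simp: w0_def Sig_def)
      have phi_eq: "phi x = (\<Prod>i<n. (\<lambda>k. if k = x0 i then 1 else 0) (x i))" if "x \<in> Sig q" for x
        using that by (auto simp: phi_def cyl_def indicator_def prod.neutral)
      have "continuous_on (Sig q) (\<lambda>x. \<Prod>i<n. (\<lambda>k. if k = x0 i then 1 else (0::real)) (x i))"
        by (intro continuous_on_prod continuous_on_compose2[OF Topological_Spaces.continuous_on_discrete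
              continuous_on_subset[OF continuous_on_product_coordinates]]) auto
      then have phic: "continuous_on (Sig q) phi"
        using phi_eq by (metis (no_types, lifting) continuous_on_cong)
      have Lphi: "((transfer q psi) ^^ n) phi x = g x" if x: "x \<in> Sig q" for x
      proof -
        have "((transfer q psi) ^^ n) phi x =
          (\<Sum>w\<in>{w. set w \<subseteq> {1..q} \<and> length w = n}. exp (birk psi n (capp w x)) * (if w = w0 then 1 else 0))"
        proof (subst transfer_iter[OF x], rule sum.cong[OF refl])
          fix w assume w: "w \<in> {w. set w \<subseteq> {1..q} \<and> length w = n}"
          have "capp w x \<in> Sig q" using capp_Sig w x by auto
          moreover have "(\<forall>i<n. capp w x i = x0 i) \<longleftrightarrow> w = w0"
            using w by (auto simp: capp_def w0_def list_eq_iff_nth_eq)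
          ultimately show "exp (birk psi n (capp w x)) * phi (capp w x) =
              exp (birk psi n (capp w x)) * (if w = w0 then 1 else 0)"
            by (auto simp: phi_def cyl_def indicator_def)
        qed
        also have "\<dots> = g x" using w0W by (simp add: g_def if_distrib finite_lists_length_eq cong: if_cong)
        finally show ?thesis .
      qed
      have gc: "continuous_on (Sig q) g"
        using transfer_iter_cont[OF psi phic, of n] Lphi by (metis (no_types, lifting) continuous_on_cong)
      have gm: "g \<in> borel_measurable \<mu>"
        by (subst measurable_cong_sets[OF st refl]) (rule borel_measurable_continuous_on_restrict[OF gc])
      have gb: "exp (birk psi n y - ?X n) \<le> g x \<and> g x \<le> exp (birk psi n y + ?X n)" if x: "x \<in> Sig q" for x
      proof -
        have "capp w0 x \<in> cyl q n y"
          using y capp_Sig[of w0 q x] w0W x by (auto simp: cyl_def capp_def w0_def)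
        from xi_bound[OF psi yS this] show ?thesis unfolding g_def by (simp add: abs_le_iff)
      qed
      have gi: "integrable \<mu> g"
        by (rule finite_measure.integrable_const_bound[OF fm _ gm, of "exp (birk psi n y + ?X n)"])
           (rule AE_I2, use gb sp in \<open>auto simp: g_def\<close>)
      have ci: "integrable \<mu> (\<lambda>x. c)" for c :: real
        using finite_measure.integrable_const_bound[OF fm, of "\<lambda>x. c" "\<bar>c\<bar>"] by simp
      have eq: "?r ^ n * measure \<mu> (cyl q n x0) = (\<integral>x. g x \<partial>\<mu>)"
      proof -
        have "(\<integral>x. ((transfer q psi) ^^ n) phi x \<partial>\<mu>) = ?r ^ n * (\<integral>x. phi x \<partial>\<mu>)"
          by (rule conf_iter[OF conf psi phic])
        moreover have "(\<integral>x. ((transfer q psi) ^^ n) phi x \<partial>\<mu>) = (\<integral>x. g x \<partial>\<mu>)"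
          by (rule Bochner_Integration.integral_cong[OF refl]) (use Lphi sp in auto)
        moreover have "(\<integral>x. phi x \<partial>\<mu>) = measure \<mu> (cyl q n x0)"
          unfolding phi_def using sp by (simp add: cyl_def Int_absorb2 subset_iff)
        ultimately show ?thesis by simp
      qed
      have "(\<integral>x. exp (birk psi n y - ?X n) \<partial>\<mu>) \<le> (\<integral>x. g x \<partial>\<mu>)"
        by (rule integral_mono[OF ci gi]) (use gb sp in auto)
      moreover have "(\<integral>x. g x \<partial>\<mu>) \<le> (\<integral>x. exp (birk psi n y + ?X n) \<partial>\<mu>)"
        by (rule integral_mono[OF gi ci]) (use gb sp in auto)
      ultimately show ?thesis using eq sp by (simp add: mult.commute)
    qed
    obtain z where z: "z \<in> Sig q"
      using pos by (metis emeasure_empty equals0I less_irrefl)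
    have zc: "z \<in> cyl q 1 z" using z by (simp add: cyl_def)
    have rpos: "?r > 0"
    proof (rule ccontr)
      assume "\<not> ?r > 0"
      then have "?r ^ 1 * measure \<mu> (cyl q 1 z) \<le> 0"
        by (simp add: mult_nonpos_nonneg)
      moreover have "?m * exp (birk psi 1 z - ?X 1) > 0" using mpos by simp
      ultimately show False using key[OF z zc] by linarith
    qed
    show ?thesis
      unfolding weak_gibbs_def
    proof (intro exI[of _ "ln ?r"] exI[of _ "\<lambda>n. (?m + 1 / ?m) * exp (?X n)"] conjI allI impI)
      fix n show "(?m + 1 / ?m) * exp (?X n) > 0" using mpos by (simp add: add_pos_pos)
    next
      have "(\<lambda>n. ln ((?m + 1 / ?m) * exp (?X n)) / real n) = (\<lambda>n. ln (?m + 1 / ?m) / real n + ?X n / real n)"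
      proof
        fix n
        have "?m + 1 / ?m > 0" using mpos by (simp add: add_pos_pos)
        then show "ln ((?m + 1 / ?m) * exp (?X n)) / real n = ln (?m + 1 / ?m) / real n + ?X n / real n"
          by (simp add: ln_mult add_divide_distrib)
      qed
      moreover have "(\<lambda>n. ln (?m + 1 / ?m) / real n + ?X n / real n) \<longlonglongrightarrow> 0 + 0"
        by (intro tendsto_add lim_const_over_n assms(2))
      ultimately show "(\<lambda>n. ln ((?m + 1 / ?m) * exp (?X n)) / real n) \<longlonglongrightarrow> 0" by simp
    next
      fix n x y assume x: "x \<in> Sig q" and y: "y \<in> cyl q n x"
      let ?A = "measure \<mu> (cyl q n x)" and ?B = "birk psi n y" and ?E = "exp (?X n)"
      have Eeq: "exp (- ?B + real n * ln ?r) = ?r ^ n / exp ?B"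
      proof -
        have "exp (real n * ln ?r) = ?r ^ n" using rpos by (simp add: exp_of_nat_mult)
        moreover have "exp (- ?B + real n * ln ?r) = exp (real n * ln ?r) / exp ?B"
          by (simp add: exp_diff[symmetric])
        ultimately show ?thesis by simp
      qed
      have k: "?m * exp (?B - ?X n) \<le> ?r ^ n * ?A" "?r ^ n * ?A \<le> ?m * exp (?B + ?X n)"
        using key[OF x y] by auto
      have lo: "?m / ?E \<le> ?A * exp (- ?B + real n * ln ?r)"
        using k(1) unfolding Eeq by (simp add: exp_diff field_simps)
      have hi: "?A * exp (- ?B + real n * ln ?r) \<le> ?m * ?E"
        using k(2) unfolding Eeq by (simp add: exp_add field_simps)
      have "1 / ((?m + 1 / ?m) * ?E) \<le> ?m / ?E"
      proof -
        have a: "1 / ?m \<le> ?m + 1 / ?m" using mpos by simp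
        have "1 / (?m + 1 / ?m) \<le> 1 / (1 / ?m)"
          by (rule divide_left_mono[OF a]) (use mpos in \<open>auto intro!: mult_pos_pos add_pos_pos divide_pos_pos\<close>)
        then have "1 / (?m + 1 / ?m) \<le> ?m" by simp
        then have "(1 / (?m + 1 / ?m)) / ?E \<le> ?m / ?E" by (rule divide_right_mono) simp
        then show ?thesis by simp
      qed
      then show "1 / ((?m + 1 / ?m) * ?E) \<le> ?A * exp (- ?B + real n * ln ?r)" using lo by linarith
      have "?m * ?E \<le> (?m + 1 / ?m) * ?E" using mpos by (intro mult_right_mono) auto
      then show "?A * exp (- ?B + real n * ln ?r) \<le> (?m + 1 / ?m) * ?E" using hi by linarith
    qed
  qed
  show ?thesis using wbv wg by blast
qed

end
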